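(* Let $Q$ be a quiver without oriented cycles, $\mathbf D=k\tilde Q/\mathcal I$, $i$ a sink of $Q$, and $M$ a $\Delta$-filtered $\mathbf D$-module with $d_i=(\underline{\dim}_\Delta M)_i>0$. Then $M$ has a unique quotient module isomorphic to $\Delta(i)^{d_i}$ (i.e. a unique submodule $Y$ with $M/Y\cong\Delta(i)^{d_i}$), and this submodule $Y$ is $\Delta$-filtered.
   Context: $k$ is an algebraically closed field. $\tilde Q$ is the double of $Q$ (arrows $\alpha\in Q_1$ and $\alpha^*:t(\alpha)\to s(\alpha)$), paths composed right to left; $\mathcal I\subseteq k\tilde Q$ is generated by $\alpha^*\alpha-\sum_{\gamma\in Q_1,t(\gamma)=s(\alpha)}\gamma\gamma^*$ ($\alpha\in Q_1$) and $\beta^*\alpha$ ($\alpha\ne\beta\in Q_1$, $t(\alpha)=t(\beta)$). $\Delta(i)$ is the indecomposable projective $kQ$-module with top $L(i)$, a $\mathbf D$-module via $\mathbf D\to kQ$ (killing the $\alpha^*$). $\Delta$-filtered: has a filtration by submodules with successive quotients among the $\Delta(j)$ (equivalently, projective as a $kQ$-module). $\underline{\dim}_\Delta(M)_i$ is the multiplicity of $\Delta(i)$ in such a filtration. A sink is a vertex at which no arrow of $Q$ starts. *)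

theory Defs
  imports Main "HOL-Library.Function_Algebras"
begin

text \<open>A finite quiver Q: vertices = the finite type 'v, arrows = the finite type 'e,
  an arrow a goes from s a to t a.  Arrows of the double quiver are
  Inl a (= a) and Inr a (= a star, from t a to s a).\<close>

fun dsrc :: "('e \<Rightarrow> 'v) \<Rightarrow> ('e \<Rightarrow> 'v) \<Rightarrow> 'e + 'e \<Rightarrow> 'v" where
  "dsrc s t (Inl a) = s a"
| "dsrc s t (Inr a) = t a"

fun dtgt :: "('e \<Rightarrow> 'v) \<Rightarrow> ('e \<Rightarrow> 'v) \<Rightarrow> 'e + 'e \<Rightarrow> 'v" where
  "dtgt s t (Inl a) = t a"
| "dtgt s t (Inr a) = s a"

text \<open>A representation: a scalar multiplication on the ambient type 'm, a family of
  subspaces (vector spaces at the vertices) and the linear maps of the arrows of the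
  double quiver.\<close>

record ('v, 'e, 'k, 'm) rep =
  scl :: "'k \<Rightarrow> 'm \<Rightarrow> 'm"
  sp  :: "'v \<Rightarrow> 'm set"
  act :: "'e + 'e \<Rightarrow> 'm \<Rightarrow> 'm"

definition lin_on :: "('k \<Rightarrow> 'm \<Rightarrow> 'm) \<Rightarrow> ('k \<Rightarrow> 'n \<Rightarrow> 'n) \<Rightarrow> 'm set
    \<Rightarrow> ('m::ab_group_add \<Rightarrow> 'n::ab_group_add) \<Rightarrow> bool" where
  "lin_on sc1 sc2 A f \<longleftrightarrow>
     (\<forall>x\<in>A. \<forall>y\<in>A. f (x + y) = f x + f y) \<and> (\<forall>c. \<forall>x\<in>A. f (sc1 c x) = sc2 c (f x))"

definition closed_subspace :: "('k \<Rightarrow> 'm \<Rightarrow> 'm) \<Rightarrow> 'm::ab_group_add set \<Rightarrow> bool" where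
  "closed_subspace sc A \<longleftrightarrow> 0 \<in> A \<and> (\<forall>x\<in>A. \<forall>y\<in>A. x + y \<in> A) \<and> (\<forall>c. \<forall>x\<in>A. sc c x \<in> A)"

definition is_vs :: "('k::field \<Rightarrow> 'm \<Rightarrow> 'm) \<Rightarrow> 'm::ab_group_add set \<Rightarrow> bool" where
  "is_vs sc A \<longleftrightarrow> closed_subspace sc A \<and>
     (\<forall>x\<in>A. \<forall>y\<in>A. \<forall>c. sc c (x + y) = sc c x + sc c y) \<and>
     (\<forall>x\<in>A. \<forall>a b. sc (a + b) x = sc a x + sc b x) \<and>
     (\<forall>x\<in>A. \<forall>a b. sc (a * b) x = sc a (sc b x)) \<and>
     (\<forall>x\<in>A. sc 1 x = x)"

definition is_rep :: "('e \<Rightarrow> 'v) \<Rightarrow> ('e \<Rightarrow> 'v) \<Rightarrow> ('v, 'e, 'k::field, 'm::ab_group_add) rep \<Rightarrow> bool" where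
  "is_rep s t R \<longleftrightarrow> (\<forall>i. is_vs (scl R) (sp R i)) \<and>
     (\<forall>a. lin_on (scl R) (scl R) (sp R (dsrc s t a)) (act R a) \<and>
          act R a ` sp R (dsrc s t a) \<subseteq> sp R (dtgt s t a))"

text \<open>Modules over D = k Qtilde / I, i.e. representations of the double quiver satisfying
  the generating relations of I (paths composed right to left).\<close>

definition is_D_module :: "('e::finite \<Rightarrow> 'v) \<Rightarrow> ('e \<Rightarrow> 'v) \<Rightarrow> ('v, 'e, 'k::field, 'm::ab_group_add) rep \<Rightarrow> bool" where
  "is_D_module s t R \<longleftrightarrow> is_rep s t R \<and>
     (\<forall>a. \<forall>x\<in>sp R (s a). act R (Inr a) (act R (Inl a) x) =
            (\<Sum>g\<in>{g. t g = s a}. act R (Inl g) (act R (Inr g) x))) \<and>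
     (\<forall>a b. a \<noteq> b \<and> t a = t b \<longrightarrow> (\<forall>x\<in>sp R (s a). act R (Inr b) (act R (Inl a) x) = 0))"

definition is_subrep :: "('e \<Rightarrow> 'v) \<Rightarrow> ('e \<Rightarrow> 'v) \<Rightarrow> ('v, 'e, 'k, 'm::ab_group_add) rep \<Rightarrow> ('v \<Rightarrow> 'm set) \<Rightarrow> bool" where
  "is_subrep s t R U \<longleftrightarrow> (\<forall>i. U i \<subseteq> sp R i \<and> closed_subspace (scl R) (U i)) \<and>
     (\<forall>a. act R a ` U (dsrc s t a) \<subseteq> U (dtgt s t a))"

definition restrict :: "('v, 'e, 'k, 'm) rep \<Rightarrow> ('v \<Rightarrow> 'm set) \<Rightarrow> ('v, 'e, 'k, 'm) rep" where
  "restrict R U = R\<lparr>sp := U\<rparr>"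

definition is_hom :: "('e \<Rightarrow> 'v) \<Rightarrow> ('e \<Rightarrow> 'v) \<Rightarrow> ('v, 'e, 'k, 'm::ab_group_add) rep
    \<Rightarrow> ('v, 'e, 'k, 'n::ab_group_add) rep \<Rightarrow> ('v \<Rightarrow> 'm \<Rightarrow> 'n) \<Rightarrow> bool" where
  "is_hom s t R N f \<longleftrightarrow>
     (\<forall>i. lin_on (scl R) (scl N) (sp R i) (f i) \<and> f i ` sp R i \<subseteq> sp N i) \<and>
     (\<forall>a. \<forall>x\<in>sp R (dsrc s t a). f (dtgt s t a) (act R a x) = act N a (f (dsrc s t a) x))"

text \<open>quot_iso R Y N: R / Y is isomorphic to N, i.e. there is a surjective module
  homomorphism R \<rightarrow> N with kernel Y.\<close>

definition quot_iso :: "('e \<Rightarrow> 'v) \<Rightarrow> ('e \<Rightarrow> 'v) \<Rightarrow> ('v, 'e, 'k, 'm::ab_group_add) rep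
    \<Rightarrow> ('v \<Rightarrow> 'm set) \<Rightarrow> ('v, 'e, 'k, 'n::ab_group_add) rep \<Rightarrow> bool" where
  "quot_iso s t R Y N \<longleftrightarrow> (\<exists>f. is_hom s t R N f \<and>
     (\<forall>i. f i ` sp R i = sp N i \<and> {x \<in> sp R i. f i x = 0} = Y i))"

text \<open>Paths of Q as lists of arrows, last arrow first: qpath j l p means p is a path
  from j to l.\<close>

fun qpath :: "('e \<Rightarrow> 'v) \<Rightarrow> ('e \<Rightarrow> 'v) \<Rightarrow> 'v \<Rightarrow> 'v \<Rightarrow> 'e list \<Rightarrow> bool" where
  "qpath s t j l [] = (j = l)"
| "qpath s t j l (a # p) = (t a = l \<and> qpath s t j (s a) p)"

text \<open>Delta(j) = kQ e_j (basis: paths starting at j), viewed as D-module with the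
  starred arrows acting by zero.  Elements are finitely supported coefficient functions
  on paths.\<close>

definition Delta :: "('e \<Rightarrow> 'v) \<Rightarrow> ('e \<Rightarrow> 'v) \<Rightarrow> 'v \<Rightarrow> ('v, 'e, 'k::field, 'e list \<Rightarrow> 'k) rep" where
  "Delta s t j = \<lparr> scl = (\<lambda>c f p. c * f p),
     sp = (\<lambda>l. {f. \<forall>p. f p \<noteq> 0 \<longrightarrow> qpath s t j l p}),
     act = (\<lambda>a f. case a of
              Inl b \<Rightarrow> (\<lambda>q. case q of [] \<Rightarrow> 0 | c # p \<Rightarrow> (if c = b then f p else 0))
            | Inr b \<Rightarrow> 0) \<rparr>"

definition rep_pow :: "('v, 'e, 'k, 'm::ab_group_add) rep \<Rightarrow> nat \<Rightarrow> ('v, 'e, 'k, nat \<Rightarrow> 'm) rep" where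
  "rep_pow R d = \<lparr> scl = (\<lambda>c x n. if n < d then scl R c (x n) else 0),
     sp = (\<lambda>l. {x. \<forall>n. (n < d \<longrightarrow> x n \<in> sp R l) \<and> (d \<le> n \<longrightarrow> x n = 0)}),
     act = (\<lambda>a x n. if n < d then act R a (x n) else 0) \<rparr>"

definition delta_filtration :: "('e \<Rightarrow> 'v) \<Rightarrow> ('e \<Rightarrow> 'v) \<Rightarrow> ('v, 'e, 'k::field, 'm::ab_group_add) rep
    \<Rightarrow> nat \<Rightarrow> (nat \<Rightarrow> 'v \<Rightarrow> 'm set) \<Rightarrow> 'v list \<Rightarrow> bool" where
  "delta_filtration s t M n F js \<longleftrightarrow> length js = n \<and>
     (\<forall>k\<le>n. is_subrep s t M (F k)) \<and> (\<forall>i. F 0 i = {0}) \<and> F n = sp M \<and>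
     (\<forall>k<n. (\<forall>i. F k i \<subseteq> F (Suc k) i) \<and>
            quot_iso s t (restrict M (F (Suc k))) (F k) (Delta s t (js ! k)))"

definition delta_filtered :: "('e \<Rightarrow> 'v) \<Rightarrow> ('e \<Rightarrow> 'v) \<Rightarrow> ('v, 'e, 'k::field, 'm::ab_group_add) rep \<Rightarrow> bool" where
  "delta_filtered s t M \<longleftrightarrow> (\<exists>n F js. delta_filtration s t M n F js)"

text \<open>Multiplicity of Delta(i) in a (chosen) Delta-filtration of M.\<close>

definition dimDelta :: "('e \<Rightarrow> 'v) \<Rightarrow> ('e \<Rightarrow> 'v) \<Rightarrow> ('v, 'e, 'k::field, 'm::ab_group_add) rep \<Rightarrow> 'v \<Rightarrow> nat" where
  "dimDelta s t M i =
     (let (n, F, js) = (SOME (n, F, js). delta_filtration s t M n F js)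
      in length (filter (\<lambda>j. j = i) js))"

definition alg_closed_type :: "'k::field itself \<Rightarrow> bool" where
  "alg_closed_type _ \<longleftrightarrow>
     (\<forall>n>0. \<forall>c :: nat \<Rightarrow> 'k. \<exists>x. x ^ n + (\<Sum>m<n. c m * x ^ m) = 0)"

end

theory Submission
  imports Defs "Jordan_Normal_Form.Determinant"
begin

hide_const (open) FuncSet.restrict


lemma T_zero:
  fixes T :: "'a::ab_group_add \<Rightarrow> 'b::ab_group_add"
  assumes "\<forall>u\<in>K. \<forall>v\<in>K. T (u+v) = T u + T v" "0 \<in> K"
  shows "T 0 = 0"
proof -
  have "T (0+0) = T 0 + T 0" using assms by blast
  then show ?thesis by simp
qed

lemma Kd_lin_sum:
  fixes T :: "(nat \<Rightarrow> 'k::field) \<Rightarrow> (nat \<Rightarrow> 'k)"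
  assumes K: "K = {v. \<forall>n\<ge>d. v n = 0}"
    and add: "\<forall>u\<in>K. \<forall>v\<in>K. T (u+v) = T u + T v"
    and scl: "\<forall>c. \<forall>u\<in>K. T (\<lambda>n. c * u n) = (\<lambda>n. c * T u n)"
    and S: "finite S" "S \<subseteq> {..<d}"
  shows "T (\<lambda>m. \<Sum>n\<in>S. u n * (if m = n then 1 else 0)) = (\<lambda>m. \<Sum>n\<in>S. u n * T (\<lambda>l. if l = n then 1 else 0) m)"
  using S
proof (induction S rule: finite_induct)
  case empty
  have "T 0 = 0" by (rule T_zero[OF add]) (simp add: K)
  then show ?case by (simp add: zero_fun_def)
next
  case (insert x S)
  let ?e = "\<lambda>n. (\<lambda>l::nat. if l = n then (1::'k) else 0)"
  have ex: "?e x \<in> K" using insert K by auto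
  have eq: "(\<lambda>m. \<Sum>n\<in>insert x S. u n * ?e n m) = (\<lambda>m. u x * ?e x m) + (\<lambda>m. \<Sum>n\<in>S. u n * ?e n m)"
    using insert by (auto simp: fun_eq_iff)
  have m1: "(\<lambda>m. u x * ?e x m) \<in> K" using insert K by auto
  have m2: "(\<lambda>m. \<Sum>n\<in>S. u n * ?e n m) \<in> K" using insert K by (auto intro!: sum.neutral)
  have "T (\<lambda>m. \<Sum>n\<in>insert x S. u n * ?e n m) = T (\<lambda>m. u x * ?e x m) + T (\<lambda>m. \<Sum>n\<in>S. u n * ?e n m)"
    unfolding eq using add m1 m2 by blast
  also have "T (\<lambda>m. u x * ?e x m) = (\<lambda>m. u x * T (?e x) m)" using scl[THEN spec, of "u x", THEN bspec, OF ex] by simp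
  finally show ?case using insert by (simp add: fun_eq_iff)
qed

lemma Kd_surj_inj:
  fixes T :: "(nat \<Rightarrow> 'k::field) \<Rightarrow> (nat \<Rightarrow> 'k)"
  assumes K: "K = {v. \<forall>n\<ge>d. v n = 0}"
    and add: "\<forall>u\<in>K. \<forall>v\<in>K. T (u+v) = T u + T v"
    and scl: "\<forall>c. \<forall>u\<in>K. T (\<lambda>n. c * u n) = (\<lambda>n. c * T u n)"
    and into: "T ` K \<subseteq> K" and surj: "K \<subseteq> T ` K"
    and u: "u \<in> K" and Tu: "T u = 0"
  shows "u = 0"
proof -
  let ?e = "\<lambda>n. (\<lambda>l::nat. if l = n then (1::'k) else 0)"
  have rep: "v = (\<lambda>m. \<Sum>n<d. v n * ?e n m)" if "v \<in> K" for v
  proof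
    fix m show "v m = (\<Sum>n<d. v n * ?e n m)"
      using that K by (cases "m < d") (auto simp: if_distrib cong: if_cong)
  qed
  have Tv: "T v = (\<lambda>m. \<Sum>n<d. v n * T (?e n) m)" if "v \<in> K" for v
    using Kd_lin_sum[OF K add scl, of "{..<d}" v] rep[OF that] by simp
  have "\<forall>n. \<exists>b. n < d \<longrightarrow> b \<in> K \<and> T b = ?e n"
  proof
    fix n show "\<exists>b. n < d \<longrightarrow> b \<in> K \<and> T b = ?e n"
    proof (cases "n < d")
      case True
      then have en: "?e n \<in> K" using K by simp
      then obtain b where "b \<in> K" "T b = ?e n" using surj by (metis imageE subsetD)
      then show ?thesis by blast
    qed auto
  qed
  then obtain b where b: "\<And>n. n < d \<Longrightarrow> b n \<in> K \<and> T (b n) = ?e n" by metis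
  define A where "A = mat d d (\<lambda>(m,n). T (?e n) m)"
  define B where "B = mat d d (\<lambda>(m,n). b n m)"
  have A: "A \<in> carrier_mat d d" and B: "B \<in> carrier_mat d d" unfolding A_def B_def by auto
  have AB: "A * B = 1\<^sub>m d"
  proof (rule eq_matI)
    fix m n assume mn: "m < dim_row (1\<^sub>m d)" "n < dim_col (1\<^sub>m d)"
    then have "(A * B) $$ (m,n) = (\<Sum>l<d. T (?e l) m * b n l)"
      unfolding A_def B_def by (auto simp: scalar_prod_def atLeast0LessThan intro!: sum.cong)
    also have "\<dots> = T (b n) m"
    proof -
      have "n < d" using mn by simp
      then have "T (b n) = (\<lambda>m. \<Sum>l<d. b n l * T (?e l) m)" using Tv b by blast
      then show ?thesis by (simp add: mult.commute)
    qed
    also have "\<dots> = 1\<^sub>m d $$ (m,n)" using b[of n] mn by auto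
    finally show "(A * B) $$ (m,n) = 1\<^sub>m d $$ (m,n)" .
  qed (auto simp: A_def B_def)
  have BA: "B * A = 1\<^sub>m d" by (rule mat_mult_left_right_inverse[OF A B AB])
  define uv where "uv = vec d (\<lambda>n. u n)"
  have "A *\<^sub>v uv = 0\<^sub>v d"
  proof (rule eq_vecI)
    fix m assume m: "m < dim_vec (0\<^sub>v d)"
    have "(A *\<^sub>v uv) $ m = (\<Sum>n<d. T (?e n) m * u n)"
      using m unfolding A_def uv_def by (auto simp: scalar_prod_def atLeast0LessThan intro!: sum.cong)
    also have "\<dots> = T u m" using Tv[OF u] by (simp add: mult.commute)
    finally show "(A *\<^sub>v uv) $ m = 0\<^sub>v d $ m" using Tu m by simp
  qed (auto simp: A_def)
  then have "B *\<^sub>v (A *\<^sub>v uv) = 0\<^sub>v d" using B by (auto intro!: eq_vecI simp: scalar_prod_def)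
  moreover have "B *\<^sub>v (A *\<^sub>v uv) = uv"
    using assoc_mult_mat_vec[OF B A, of uv] BA by (simp add: uv_def)
  ultimately have "uv = 0\<^sub>v d" by simp
  then have z: "u n = 0" if "n < d" for n
    using that unfolding uv_def by (metis index_vec index_zero_vec(1))
  show ?thesis
  proof
    fix n show "u n = 0 n" using z u K by (cases "n < d") auto
  qed
qed



lemma sum_fun_apply: "finite S \<Longrightarrow> (\<Sum>a\<in>S. f a) x = (\<Sum>a\<in>S. f a x)"
  by (induction S rule: finite_induct) auto

section \<open>Vector space basics\<close>

lemma vs_cs: "is_vs sc A \<Longrightarrow> closed_subspace sc A" by (simp add: is_vs_def)
lemma cs_zero: "closed_subspace sc A \<Longrightarrow> 0 \<in> A" by (simp add: closed_subspace_def)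
lemma cs_add: "closed_subspace sc A \<Longrightarrow> x \<in> A \<Longrightarrow> y \<in> A \<Longrightarrow> x + y \<in> A"
  by (simp add: closed_subspace_def)
lemma cs_scl: "closed_subspace sc A \<Longrightarrow> x \<in> A \<Longrightarrow> sc c x \<in> A"
  by (simp add: closed_subspace_def)

lemma vs_scl_distl: "is_vs sc A \<Longrightarrow> x \<in> A \<Longrightarrow> y \<in> A \<Longrightarrow> sc c (x + y) = sc c x + sc c y"
  by (simp add: is_vs_def)
lemma vs_scl_distr: "is_vs sc A \<Longrightarrow> x \<in> A \<Longrightarrow> sc (a + b) x = sc a x + sc b x"
  by (simp add: is_vs_def)
lemma vs_scl_assoc: "is_vs sc A \<Longrightarrow> x \<in> A \<Longrightarrow> sc (a * b) x = sc a (sc b x)"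
  by (simp add: is_vs_def)
lemma vs_scl_one: "is_vs sc A \<Longrightarrow> x \<in> A \<Longrightarrow> sc 1 x = x"
  by (simp add: is_vs_def)

lemma vs_scl_zero: assumes "is_vs sc A" "x \<in> A" shows "sc 0 x = 0"
proof -
  have "sc (0+0) x = sc 0 x + sc 0 x" using vs_scl_distr[OF assms] .
  then show ?thesis by simp
qed

lemma vs_neg: assumes "is_vs sc A" "x \<in> A" shows "sc (-1) x = - x"
proof -
  have "sc (1 + -1) x = sc 1 x + sc (-1) x" using vs_scl_distr[OF assms] .
  then have "0 = x + sc (-1) x" using vs_scl_zero[OF assms] vs_scl_one[OF assms] by simp
  then have "- x + 0 = - x + (x + sc (-1) x)" by simp
  then show ?thesis by (simp add: add_minus_cancel)
qed

definition subsp :: "('k::field \<Rightarrow> 'm \<Rightarrow> 'm) \<Rightarrow> 'm::ab_group_add set \<Rightarrow> 'm set \<Rightarrow> bool" where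
  "subsp sc A U \<longleftrightarrow> is_vs sc A \<and> U \<subseteq> A \<and> closed_subspace sc U"

lemma subsp_vs: "is_vs sc A \<Longrightarrow> subsp sc A A" by (simp add: subsp_def vs_cs)
lemma subsp_zero: "subsp sc A U \<Longrightarrow> 0 \<in> U" by (simp add: subsp_def closed_subspace_def)
lemma subsp_add: "subsp sc A U \<Longrightarrow> x \<in> U \<Longrightarrow> y \<in> U \<Longrightarrow> x + y \<in> U"
  by (simp add: subsp_def closed_subspace_def)
lemma subsp_scl: "subsp sc A U \<Longrightarrow> x \<in> U \<Longrightarrow> sc c x \<in> U"
  by (simp add: subsp_def closed_subspace_def)
lemma subsp_uminus: assumes "subsp sc A U" "x \<in> U" shows "- x \<in> U"
proof -
  have "x \<in> A" "is_vs sc A" using assms by (auto simp: subsp_def)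
  then have "sc (-1) x = - x" by (rule vs_neg[rotated])
  then show ?thesis using subsp_scl[OF assms, of "-1"] by simp
qed
lemma subsp_diff: "subsp sc A U \<Longrightarrow> x \<in> U \<Longrightarrow> y \<in> U \<Longrightarrow> x - y \<in> U"
  using subsp_add[of sc A U x "- y"] subsp_uminus[of sc A U y] by simp
lemma subsp_sum: assumes "subsp sc A U" "finite S" "\<And>a. a \<in> S \<Longrightarrow> f a \<in> U" shows "(\<Sum>a\<in>S. f a) \<in> U"
  using assms(2,3)
proof (induction S rule: finite_induct)
  case empty then show ?case using assms(1) by (simp add: subsp_zero)
next
  case (insert x F) then show ?case using assms(1) by (simp add: subsp_add)
qed
lemma subsp_sub: "subsp sc A U \<Longrightarrow> x \<in> U \<Longrightarrow> x \<in> A" by (auto simp: subsp_def)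
lemma subsp_trans: "subsp sc A U \<Longrightarrow> V \<subseteq> U \<Longrightarrow> closed_subspace sc V \<Longrightarrow> subsp sc A V"
  by (auto simp: subsp_def)
lemma subsp_int: "subsp sc A U \<Longrightarrow> subsp sc A V \<Longrightarrow> subsp sc A (U \<inter> V)"
  by (auto simp: subsp_def closed_subspace_def)

lemma vs_scl_diff: assumes "is_vs sc A" "x \<in> A" "y \<in> A" shows "sc c (x - y) = sc c x - sc c y"
proof -
  have U: "subsp sc A A" using assms by (simp add: subsp_vs)
  have "x - y \<in> A" using subsp_diff[OF U assms(2,3)] .
  then have "sc c (x - y + y) = sc c (x - y) + sc c y" using vs_scl_distl[OF assms(1)] assms(3) by blast
  then show ?thesis by (simp add: eq_diff_eq)
qed

lemma vs_scl_sum: assumes "is_vs sc A" "finite S" "\<And>a. a \<in> S \<Longrightarrow> f a \<in> A"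
  shows "sc c (\<Sum>a\<in>S. f a) = (\<Sum>a\<in>S. sc c (f a))"
  using assms(2,3)
proof (induction S rule: finite_induct)
  case empty
  have "0 \<in> A" using assms(1) by (simp add: is_vs_def closed_subspace_def)
  then have "sc c (0 + 0) = sc c 0 + sc c 0" using vs_scl_distl[OF assms(1)] by blast
  then show ?case by simp
next
  case (insert x F)
  have "(\<Sum>a\<in>F. f a) \<in> A" using subsp_sum[OF subsp_vs[OF assms(1)] insert(1)] insert(4) by blast
  then show ?case using insert vs_scl_distl[OF assms(1)] by simp
qed

section \<open>Linear maps\<close>

lemma lin_add: "lin_on sc1 sc2 A f \<Longrightarrow> x \<in> A \<Longrightarrow> y \<in> A \<Longrightarrow> f (x + y) = f x + f y"
  by (simp add: lin_on_def)
lemma lin_scl: "lin_on sc1 sc2 A f \<Longrightarrow> x \<in> A \<Longrightarrow> f (sc1 c x) = sc2 c (f x)"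
  by (simp add: lin_on_def)
lemma lin_mono: "lin_on sc1 sc2 A f \<Longrightarrow> B \<subseteq> A \<Longrightarrow> lin_on sc1 sc2 B f"
  unfolding lin_on_def by blast
lemma lin_zero: assumes "lin_on sc1 sc2 A f" "0 \<in> A" shows "f 0 = 0"
proof -
  have "f (0 + 0) = f 0 + f 0" using lin_add[OF assms(1) assms(2) assms(2)] .
  then show ?thesis by simp
qed
lemma lin_diff: assumes "lin_on sc1 sc2 A f" "subsp sc1 B A" "x \<in> A" "y \<in> A"
  shows "f (x - y) = f x - f y"
proof -
  have "x - y \<in> A" using subsp_diff[OF assms(2) assms(3,4)] .
  then have "f (x - y + y) = f (x - y) + f y" using lin_add[OF assms(1)] assms(4) by blast
  then show ?thesis by (simp add: eq_diff_eq)
qed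
lemma lin_sum: assumes "lin_on sc1 sc2 A f" "subsp sc1 B A" "finite S" "\<And>a. a \<in> S \<Longrightarrow> g a \<in> A"
  shows "f (\<Sum>a\<in>S. g a) = (\<Sum>a\<in>S. f (g a))"
  using assms(3,4)
proof (induction S rule: finite_induct)
  case empty then show ?case using lin_zero[OF assms(1) subsp_zero[OF assms(2)]] by simp
next
  case (insert x F)
  have "(\<Sum>a\<in>F. g a) \<in> A" using subsp_sum[OF assms(2) insert(1)] insert(4) by blast
  then show ?case using insert lin_add[OF assms(1)] by simp
qed


lemma qpath_sink: assumes "\<forall>a. s a \<noteq> i" "qpath s t i l p" shows "p = [] \<and> l = i"
  using assms(2)
proof (induction p arbitrary: l)
  case Nil then show ?case by simp
next
  case (Cons a p)
  then have "qpath s t i (s a) p" by simp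
  then have "s a = i" using Cons.IH by blast
  then show ?case using assms(1) by blast
qed

lemma Delta_sp: "sp (Delta s t j) l = {f. \<forall>p. f p \<noteq> 0 \<longrightarrow> qpath s t j l p}"
  by (simp add: Delta_def)
lemma Delta_scl: "scl (Delta s t j) = (\<lambda>c f p. c * f p)"
  by (simp add: Delta_def)
lemma Delta_Inl: "act (Delta s t j) (Inl a) h = (\<lambda>q. case q of [] \<Rightarrow> 0 | c # p \<Rightarrow> (if c = a then h p else 0))"
  by (simp add: Delta_def)
lemma Delta_Inr: "act (Delta s t j) (Inr a) h = 0"
  by (simp add: Delta_def)

lemma Delta_i_other: fixes s t :: "'e \<Rightarrow> 'v"
  assumes "\<forall>a. s a \<noteq> i" "l \<noteq> i" shows "sp (Delta s t i :: ('v,'e,'k::field,'e list \<Rightarrow> 'k) rep) l = {0}"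
proof -
  have "f = 0" if "\<forall>p. f p \<noteq> 0 \<longrightarrow> qpath s t i l p" for f :: "'e list \<Rightarrow> 'k"
  proof
    fix p show "f p = 0 p" using that qpath_sink[OF assms(1), of t l p] assms(2) by auto
  qed
  then show ?thesis unfolding Delta_sp by auto
qed

lemma Delta_i_i: assumes "\<forall>a. s a \<noteq> i" shows "sp (Delta s t i) i = {h. \<forall>p. h p \<noteq> 0 \<longrightarrow> p = []}"
  by (auto simp: Delta_sp dest: qpath_sink[OF assms])

lemma restrict_simps[simp]: "scl (restrict M U) = scl M" "sp (restrict M U) = U" "act (restrict M U) = act M"
  "restrict (restrict M U) V = restrict M V"
  by (simp_all add: Defs.restrict_def)

locale qsetup =
  fixes s t :: "'e::finite \<Rightarrow> 'v" and M :: "('v, 'e, 'k::field, 'm::ab_group_add) rep" and i :: 'v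
  assumes DM: "is_D_module s t M" and sink: "\<forall>a. s a \<noteq> i"
begin

lemma vsM: "is_vs (scl M) (sp M l)"
  using DM by (simp add: is_D_module_def is_rep_def)
lemma subspM: "subsp (scl M) (sp M l) (sp M l)"
  by (rule subsp_vs[OF vsM])
lemma linA: "lin_on (scl M) (scl M) (sp M (dsrc s t a)) (act M a)"
  using DM by (simp add: is_D_module_def is_rep_def)
lemma actA: "x \<in> sp M (dsrc s t a) \<Longrightarrow> act M a x \<in> sp M (dtgt s t a)"
  using DM by (auto simp: is_D_module_def is_rep_def)
lemma linL: "lin_on (scl M) (scl M) (sp M (s a)) (act M (Inl a))"
  using linA[of "Inl a"] by simp
lemma actL: "x \<in> sp M (s a) \<Longrightarrow> act M (Inl a) x \<in> sp M (t a)"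
  using actA[of x "Inl a"] by simp

lemma subrep_subsp: "is_subrep s t M U \<Longrightarrow> subsp (scl M) (sp M l) (U l)"
  by (simp add: is_subrep_def subsp_def vsM)
lemma subrep_sub: "is_subrep s t M U \<Longrightarrow> U l \<subseteq> sp M l"
  by (simp add: is_subrep_def)
lemma subrep_actL: "is_subrep s t M U \<Longrightarrow> x \<in> U (s a) \<Longrightarrow> act M (Inl a) x \<in> U (t a)"
  unfolding is_subrep_def by (metis dsrc.simps(1) dtgt.simps(1) image_subset_iff)

definition Ai :: "'e set" where "Ai = {a. t a = i}"

definition Rof :: "('v \<Rightarrow> 'm set) \<Rightarrow> 'm set" where
  "Rof U = {(\<Sum>a\<in>Ai. act M (Inl a) (x a)) | x. \<forall>a\<in>Ai. x a \<in> U (s a)}"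

lemma RofE: "r \<in> Rof U \<Longrightarrow> (\<And>x. \<forall>a\<in>Ai. x a \<in> U (s a) \<Longrightarrow> r = (\<Sum>a\<in>Ai. act M (Inl a) (x a)) \<Longrightarrow> P) \<Longrightarrow> P"
  unfolding Rof_def by blast

lemma RofI: "\<forall>a\<in>Ai. x a \<in> U (s a) \<Longrightarrow> (\<Sum>a\<in>Ai. act M (Inl a) (x a)) \<in> Rof U"
  unfolding Rof_def by blast

lemma R_sub: assumes "is_subrep s t M U" shows "Rof U \<subseteq> U i"
proof
  fix r assume "r \<in> Rof U"
  then obtain x where x: "\<forall>a\<in>Ai. x a \<in> U (s a)" and r: "r = (\<Sum>a\<in>Ai. act M (Inl a) (x a))"
    unfolding Rof_def by blast
  have "act M (Inl a) (x a) \<in> U i" if "a \<in> Ai" for a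
    using subrep_actL[OF assms, of "x a" a] x that by (simp add: Ai_def)
  then show "r \<in> U i" unfolding r by (intro subsp_sum[OF subrep_subsp[OF assms]]) auto
qed

lemma R_subsp: assumes "is_subrep s t M U" shows "subsp (scl M) (sp M i) (Rof U)"
proof -
  have U: "\<And>l. subsp (scl M) (sp M l) (U l)" using subrep_subsp[OF assms] .
  have zero: "0 \<in> Rof U"
  proof -
    have "(\<Sum>a\<in>Ai. act M (Inl a) ((\<lambda>_. 0) a)) \<in> Rof U" by (rule RofI) (simp add: subsp_zero[OF U])
    moreover have "act M (Inl a) 0 = 0" for a using lin_zero[OF linL subsp_zero[OF subspM]] .
    ultimately show ?thesis by simp
  qed
  have add: "r1 + r2 \<in> Rof U" if RR: "r1 \<in> Rof U" "r2 \<in> Rof U" for r1 r2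
  proof -
    obtain x where x: "\<forall>a\<in>Ai. x a \<in> U (s a)" and r: "r1 = (\<Sum>a\<in>Ai. act M (Inl a) (x a))"
      using RofE[OF RR(1)] by blast
    obtain y where y: "\<forall>a\<in>Ai. y a \<in> U (s a)" and r2: "r2 = (\<Sum>a\<in>Ai. act M (Inl a) (y a))"
      using RofE[OF RR(2)] by blast
    have "(\<Sum>a\<in>Ai. act M (Inl a) (x a + y a)) \<in> Rof U"
      by (rule RofI) (use x y subsp_add[OF U] in auto)
    moreover have "act M (Inl a) (x a + y a) = act M (Inl a) (x a) + act M (Inl a) (y a)" if "a \<in> Ai" for a
      using lin_add[OF linL] x y that subsp_sub[OF U] by blast
    ultimately show ?thesis unfolding r r2 by (simp add: sum.distrib)
  qed
  have scl: "scl M c r \<in> Rof U" if RR: "r \<in> Rof U" for c r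
  proof -
    obtain x where x: "\<forall>a\<in>Ai. x a \<in> U (s a)" and r: "r = (\<Sum>a\<in>Ai. act M (Inl a) (x a))"
      using RofE[OF RR(1)] by blast
    have "(\<Sum>a\<in>Ai. act M (Inl a) (scl M c (x a))) \<in> Rof U"
      by (rule RofI) (use x subsp_scl[OF U] in auto)
    moreover have "act M (Inl a) (scl M c (x a)) = scl M c (act M (Inl a) (x a))" if "a \<in> Ai" for a
      using lin_scl[OF linL] x that subsp_sub[OF U] by blast
    moreover have "scl M c r = (\<Sum>a\<in>Ai. scl M c (act M (Inl a) (x a)))"
      unfolding r
    proof (rule vs_scl_sum[OF vsM])
      fix a assume "a \<in> Ai"
      then show "act M (Inl a) (x a) \<in> sp M i" using actL[of "x a" a] x subsp_sub[OF U] by (auto simp: Ai_def)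
    qed simp
    ultimately show ?thesis by simp
  qed
  show ?thesis unfolding subsp_def closed_subspace_def
    using zero add scl R_sub[OF assms] subrep_sub[OF assms] vsM by blast
qed

lemma R_mono: "(\<And>l. U l \<subseteq> V l) \<Longrightarrow> Rof U \<subseteq> Rof V"
  unfolding Rof_def by blast

lemma R_cong: assumes "\<And>l. l \<noteq> i \<Longrightarrow> U l = V l" shows "Rof U = Rof V"
proof -
  have "s a \<noteq> i" for a using sink by blast
  then show ?thesis unfolding Rof_def using assms by auto
qed

definition Kd :: "nat \<Rightarrow> (nat \<Rightarrow> 'k) set" where "Kd d = {v. \<forall>n\<ge>d. v n = 0}"

definition topiso :: "('v \<Rightarrow> 'm set) \<Rightarrow> nat \<Rightarrow> ('m \<Rightarrow> nat \<Rightarrow> 'k) \<Rightarrow> bool" where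
  "topiso U d g \<longleftrightarrow> (\<forall>x\<in>U i. g x \<in> Kd d) \<and> (\<forall>x\<in>U i. \<forall>y\<in>U i. g (x + y) = g x + g y) \<and>
     (\<forall>c. \<forall>x\<in>U i. g (scl M c x) = (\<lambda>n. c * g x n)) \<and> Kd d \<subseteq> g ` U i \<and>
     (\<forall>x\<in>U i. g x = 0 \<longleftrightarrow> x \<in> Rof U)"

end


locale stepl = qsetup s t M i
  for s t :: "'e::finite \<Rightarrow> 'v" and M :: "('v, 'e, 'k::field, 'm::ab_group_add) rep" and i +
  fixes U0 U1 :: "'v \<Rightarrow> 'm set" and j :: 'v and \<phi> :: "'v \<Rightarrow> 'm \<Rightarrow> 'e list \<Rightarrow> 'k"
  assumes sub0: "is_subrep s t M U0" and sub1: "is_subrep s t M U1"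
    and incl: "\<And>l. U0 l \<subseteq> U1 l"
    and hom: "is_hom s t (restrict M U1) (Delta s t j) \<phi>"
    and img: "\<And>l. \<phi> l ` U1 l = sp (Delta s t j) l"
    and ker: "\<And>l. {x \<in> U1 l. \<phi> l x = 0} = U0 l"
begin

lemma S0: "subsp (scl M) (sp M l) (U0 l)" by (rule subrep_subsp[OF sub0])
lemma S1: "subsp (scl M) (sp M l) (U1 l)" by (rule subrep_subsp[OF sub1])

lemma phi_lin: "lin_on (scl M) (\<lambda>c f p. c * f p) (U1 l) (\<phi> l)"
  using hom by (simp add: is_hom_def Delta_scl)
lemma phi_add: "x \<in> U1 l \<Longrightarrow> y \<in> U1 l \<Longrightarrow> \<phi> l (x + y) = \<phi> l x + \<phi> l y"
  by (rule lin_add[OF phi_lin])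
lemma phi_scl: "x \<in> U1 l \<Longrightarrow> \<phi> l (scl M c x) = (\<lambda>p. c * \<phi> l x p)"
  using lin_scl[OF phi_lin] by blast
lemma phi_diff: "x \<in> U1 l \<Longrightarrow> y \<in> U1 l \<Longrightarrow> \<phi> l (x - y) = \<phi> l x - \<phi> l y"
  by (rule lin_diff[OF phi_lin S1])
lemma phi_in: "x \<in> U1 l \<Longrightarrow> \<phi> l x \<in> sp (Delta s t j) l"
  using img by blast
lemma phi_surj: "h \<in> sp (Delta s t j) l \<Longrightarrow> \<exists>x\<in>U1 l. \<phi> l x = h"
  using img by (metis imageE)
lemma phi_ker: "x \<in> U1 l \<Longrightarrow> \<phi> l x = 0 \<longleftrightarrow> x \<in> U0 l"
  using ker by blast
lemma phi_Inl: "x \<in> U1 (s a) \<Longrightarrow>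
   \<phi> (t a) (act M (Inl a) x) = (\<lambda>q. case q of [] \<Rightarrow> 0 | c # p \<Rightarrow> (if c = a then \<phi> (s a) x p else 0))"
proof -
  assume x: "x \<in> U1 (s a)"
  have "\<forall>b. \<forall>x\<in>U1 (dsrc s t b). \<phi> (dtgt s t b) (act M b x) = act (Delta s t j) b (\<phi> (dsrc s t b) x)"
    using hom unfolding is_hom_def by simp
  then have "\<phi> (dtgt s t (Inl a)) (act M (Inl a) x) = act (Delta s t j) (Inl a) (\<phi> (dsrc s t (Inl a)) x)"
    using x by (metis dsrc.simps(1))
  then show ?thesis by (simp add: Delta_Inl)
qed

lemma finAi: "finite Ai" by simp

lemma phi_R: assumes x: "\<forall>a\<in>Ai. x a \<in> U1 (s a)"
  shows "\<phi> i (\<Sum>a\<in>Ai. act M (Inl a) (x a)) =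
     (\<lambda>q. case q of [] \<Rightarrow> 0 | c # p \<Rightarrow> (if c \<in> Ai then \<phi> (s c) (x c) p else 0))"
proof -
  have terms: "act M (Inl a) (x a) \<in> U1 i" if "a \<in> Ai" for a
    using subrep_actL[OF sub1, of "x a" a] x that by (simp add: Ai_def)
  have "\<phi> i (\<Sum>a\<in>Ai. act M (Inl a) (x a)) = (\<Sum>a\<in>Ai. \<phi> i (act M (Inl a) (x a)))"
    by (rule lin_sum[OF phi_lin S1 finAi terms])
  also have "\<dots> = (\<Sum>a\<in>Ai. (\<lambda>q. case q of [] \<Rightarrow> 0 | c # p \<Rightarrow> (if c = a then \<phi> (s a) (x a) p else 0)))"
  proof (rule sum.cong)
    fix a assume a: "a \<in> Ai"
    then have "t a = i" by (simp add: Ai_def)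
    then show "\<phi> i (act M (Inl a) (x a)) = (\<lambda>q. case q of [] \<Rightarrow> 0 | c # p \<Rightarrow> (if c = a then \<phi> (s a) (x a) p else 0))"
      using phi_Inl[of "x a" a] x a by simp
  qed simp
  also have "\<dots> = (\<lambda>q. case q of [] \<Rightarrow> 0 | c # p \<Rightarrow> (if c \<in> Ai then \<phi> (s c) (x c) p else 0))"
  proof
    fix q show "(\<Sum>a\<in>Ai. (\<lambda>q. case q of [] \<Rightarrow> 0 | c # p \<Rightarrow> (if c = a then \<phi> (s a) (x a) p else 0))) q =
       (case q of [] \<Rightarrow> 0 | c # p \<Rightarrow> (if c \<in> Ai then \<phi> (s c) (x c) p else 0))"
      by (cases q) (simp_all add: sum_fun_apply[OF finAi])
  qed
  finally show ?thesis .
qed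

lemma ne_surjR: assumes ji: "j \<noteq> i" and h: "h \<in> sp (Delta s t j) i"
  shows "\<exists>r\<in>Rof U1. \<phi> i r = h"
proof -
  have hz: "\<And>p. h p \<noteq> 0 \<Longrightarrow> qpath s t j i p" using h by (simp add: Delta_sp)
  have "\<forall>a. \<exists>y. a \<in> Ai \<longrightarrow> y \<in> U1 (s a) \<and> \<phi> (s a) y = (\<lambda>p. h (a # p))"
  proof
    fix a
    show "\<exists>y. a \<in> Ai \<longrightarrow> y \<in> U1 (s a) \<and> \<phi> (s a) y = (\<lambda>p. h (a # p))"
    proof (cases "a \<in> Ai")
      case True
      have "(\<lambda>p. h (a # p)) \<in> sp (Delta s t j) (s a)"
        using hz by (auto simp: Delta_sp dest: hz)
      then show ?thesis using phi_surj by blast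
    qed blast
  qed
  from choice[OF this] obtain x where x: "\<And>a. a \<in> Ai \<Longrightarrow> x a \<in> U1 (s a) \<and> \<phi> (s a) (x a) = (\<lambda>p. h (a # p))"
    by blast
  have xin: "\<forall>a\<in>Ai. x a \<in> U1 (s a)" using x by blast
  have "\<phi> i (\<Sum>a\<in>Ai. act M (Inl a) (x a)) = h"
  proof -
    have "\<phi> i (\<Sum>a\<in>Ai. act M (Inl a) (x a)) =
       (\<lambda>q. case q of [] \<Rightarrow> 0 | c # p \<Rightarrow> (if c \<in> Ai then \<phi> (s c) (x c) p else 0))"
      by (rule phi_R[OF xin])
    also have "\<dots> = h"
    proof
      fix q show "(case q of [] \<Rightarrow> 0 | c # p \<Rightarrow> (if c \<in> Ai then \<phi> (s c) (x c) p else 0)) = h q"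
      proof (cases q)
        case Nil
        then show ?thesis using hz[of "[]"] ji by auto
      next
        case (Cons c p)
        then show ?thesis using hz[of "c # p"] x[of c] by (auto simp: Ai_def)
      qed
    qed
    finally show ?thesis .
  qed
  then show ?thesis using RofI[OF xin] by blast
qed

lemma ne_int: assumes "r \<in> Rof U1" "r \<in> U0 i" shows "r \<in> Rof U0"
proof -
  obtain x where x: "\<forall>a\<in>Ai. x a \<in> U1 (s a)" and r: "r = (\<Sum>a\<in>Ai. act M (Inl a) (x a))"
    using RofE[OF assms(1)] by blast
  have "\<phi> i r = 0" using phi_ker[of r i] assms(2) incl by blast
  then have z: "(\<lambda>q. case q of [] \<Rightarrow> 0 | c # p \<Rightarrow> (if c \<in> Ai then \<phi> (s c) (x c) p else 0)) = 0"
    using phi_R[OF x] r by metis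
  have "x c \<in> U0 (s c)" if c: "c \<in> Ai" for c
  proof -
    have "\<phi> (s c) (x c) = 0"
    proof
      fix p show "\<phi> (s c) (x c) p = 0 p"
        using fun_cong[OF z, of "c # p"] c by simp
    qed
    then show ?thesis using phi_ker[of "x c" "s c"] x c by blast
  qed
  then show ?thesis unfolding r by (intro RofI) blast
qed

lemma eq_other: assumes "j = i" "l \<noteq> i" shows "U1 l = U0 l"
proof -
  have "\<phi> l x = 0" if "x \<in> U1 l" for x
  proof -
    have "\<phi> l x \<in> sp (Delta s t i) l" using phi_in[OF that] assms(1) by simp
    then show ?thesis using Delta_i_other[OF sink assms(2), of t] by blast
  qed
  then show ?thesis using ker[of l] by blast
qed

lemma eq_R: "j = i \<Longrightarrow> Rof U1 = Rof U0"
  by (rule R_cong) (rule eq_other)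

lemma eq_form: assumes "j = i" "x \<in> U1 i"
  shows "\<phi> i x = (\<lambda>p. \<phi> i x [] * (if p = [] then 1 else 0))"
proof
  fix p
  have "\<phi> i x \<in> sp (Delta s t i) i" using phi_in[OF assms(2)] assms(1) by simp
  then have "\<phi> i x \<in> {h. \<forall>p. h p \<noteq> 0 \<longrightarrow> p = []}" using Delta_i_i[OF sink, of t] by blast
  then show "\<phi> i x p = \<phi> i x [] * (if p = [] then 1 else 0)" by auto
qed

lemma step_ne: assumes ji: "j \<noteq> i" and tg: "topiso U0 d g" shows "\<exists>g'. topiso U1 d g'"
proof -
  let ?R1 = "Rof U1" and ?R0 = "Rof U0"
  have R1s: "subsp (scl M) (sp M i) ?R1" by (rule R_subsp[OF sub1])
  have R1U: "?R1 \<subseteq> U1 i" by (rule R_sub[OF sub1])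
  have R0U: "?R0 \<subseteq> U0 i" by (rule R_sub[OF sub0])
  have R01: "?R0 \<subseteq> ?R1" by (rule R_mono[OF incl])
  have gK: "\<And>x. x \<in> U0 i \<Longrightarrow> g x \<in> Kd d" and gadd: "\<And>x y. x \<in> U0 i \<Longrightarrow> y \<in> U0 i \<Longrightarrow> g (x + y) = g x + g y"
    and gscl: "\<And>c x. x \<in> U0 i \<Longrightarrow> g (scl M c x) = (\<lambda>n. c * g x n)"
    and gsurj: "Kd d \<subseteq> g ` U0 i" and gker: "\<And>x. x \<in> U0 i \<Longrightarrow> g x = 0 \<longleftrightarrow> x \<in> ?R0"
    using tg unfolding topiso_def by blast+
  have decomp: "\<exists>w\<in>U0 i. y - w \<in> ?R1" if y: "y \<in> U1 i" for y
  proof -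
    obtain r where r: "r \<in> ?R1" "\<phi> i r = \<phi> i y" using ne_surjR[OF ji phi_in[OF y]] by blast
    have rU: "r \<in> U1 i" using r R1U by blast
    have w1: "y - r \<in> U1 i" using subsp_diff[OF S1 y rU] .
    have "\<phi> i (y - r) = 0" using phi_diff[OF y rU] r by simp
    then have "y - r \<in> U0 i" using phi_ker[OF w1] by blast
    moreover have "y - (y - r) = r" by simp
    ultimately show ?thesis using r by metis
  qed
  have int: "w \<in> ?R0" if "w \<in> U0 i" "w \<in> ?R1" for w
    using ne_int that by blast
  define W where "W y = (SOME w. w \<in> U0 i \<and> y - w \<in> ?R1)" for y
  have W: "W y \<in> U0 i \<and> y - W y \<in> ?R1" if "y \<in> U1 i" for y
    unfolding W_def by (rule someI_ex) (use decomp[OF that] in blast)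
  have gW: "g (W y) = g w" if y: "y \<in> U1 i" and w: "w \<in> U0 i" "y - w \<in> ?R1" for y w
  proof -
    have "(y - w) - (y - W y) \<in> ?R1" using subsp_diff[OF R1s w(2)] W[OF y] by blast
    moreover have "(y - w) - (y - W y) = W y - w" by simp
    ultimately have d1: "W y - w \<in> ?R1" by simp
    have d0: "W y - w \<in> U0 i" using subsp_diff[OF S0] W[OF y] w by blast
    have "g (W y - w) = 0" using gker[OF d0] int[OF d0 d1] by blast
    moreover have "g ((W y - w) + w) = g (W y - w) + g w" using gadd[OF d0 w(1)] .
    ultimately show ?thesis by simp
  qed
  define g' where "g' y = g (W y)" for y
  have "topiso U1 d g'"
    unfolding topiso_def
  proof (intro conjI ballI allI subsetI)
    fix x assume "x \<in> U1 i" then show "g' x \<in> Kd d" unfolding g'_def using W gK by blast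
  next
    fix x y assume x: "x \<in> U1 i" and y: "y \<in> U1 i"
    have xy: "x + y \<in> U1 i" using subsp_add[OF S1 x y] .
    have w: "W x + W y \<in> U0 i" using subsp_add[OF S0] W x y by blast
    have "(x + y) - (W x + W y) = (x - W x) + (y - W y)" by (simp add: algebra_simps)
    moreover have "(x - W x) + (y - W y) \<in> ?R1" using subsp_add[OF R1s] W x y by blast
    ultimately have "(x + y) - (W x + W y) \<in> ?R1" by metis
    then have "g' (x + y) = g (W x + W y)" unfolding g'_def using gW[OF xy w] by blast
    also have "\<dots> = g' x + g' y" unfolding g'_def using gadd W x y by blast
    finally show "g' (x + y) = g' x + g' y" .
  next
    fix c x assume x: "x \<in> U1 i"
    have cx: "scl M c x \<in> U1 i" using subsp_scl[OF S1 x] .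
    have w: "scl M c (W x) \<in> U0 i" using subsp_scl[OF S0] W x by blast
    have xs: "x \<in> sp M i" "W x \<in> sp M i" using subsp_sub[OF S1 x] subsp_sub[OF S0] W x by blast+
    have "scl M c x - scl M c (W x) = scl M c (x - W x)" using vs_scl_diff[OF vsM xs] by simp
    then have "scl M c x - scl M c (W x) \<in> ?R1" using subsp_scl[OF R1s] W x by simp
    then have "g' (scl M c x) = g (scl M c (W x))" unfolding g'_def using gW[OF cx w] by blast
    also have "\<dots> = (\<lambda>n. c * g' x n)" unfolding g'_def using gscl W x by blast
    finally show "g' (scl M c x) = (\<lambda>n. c * g' x n)" .
  next
    fix v assume "v \<in> Kd d"
    then obtain x where x: "x \<in> U0 i" "g x = v" using gsurj by blast
    have x1: "x \<in> U1 i" using x incl by blast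
    have "x - x \<in> ?R1" using subsp_zero[OF R1s] by simp
    then have "g' x = v" unfolding g'_def using gW[OF x1 x(1)] x by simp
    then show "v \<in> g' ` U1 i" using x1 by blast
  next
    fix y assume y: "y \<in> U1 i"
    show "g' y = 0 \<longleftrightarrow> y \<in> ?R1"
    proof
      assume "g' y = 0"
      then have "W y \<in> ?R0" using gker W y unfolding g'_def by blast
      then have "W y \<in> ?R1" using R01 by blast
      moreover have "y = (y - W y) + W y" by simp
      ultimately show "y \<in> ?R1" using subsp_add[OF R1s] W[OF y] by metis
    next
      assume yr: "y \<in> ?R1"
      have z: "0 \<in> U0 i" using subsp_zero[OF S0] .
      have "g 0 = 0" using gker[OF z] subsp_zero[OF R_subsp[OF sub0]] by blast
      then show "g' y = 0" unfolding g'_def using gW[OF y z] yr by simp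
    qed
  qed
  then show ?thesis by blast
qed

lemma step_eq: assumes ji: "j = i" and tg: "topiso U0 d g" shows "\<exists>g'. topiso U1 (Suc d) g'"
proof -
  let ?R1 = "Rof U1" and ?R0 = "Rof U0"
  have R10: "?R1 = ?R0" by (rule eq_R[OF ji])
  have R0U: "?R0 \<subseteq> U0 i" by (rule R_sub[OF sub0])
  have gK: "\<And>x. x \<in> U0 i \<Longrightarrow> g x \<in> Kd d" and gadd: "\<And>x y. x \<in> U0 i \<Longrightarrow> y \<in> U0 i \<Longrightarrow> g (x + y) = g x + g y"
    and gscl: "\<And>c x. x \<in> U0 i \<Longrightarrow> g (scl M c x) = (\<lambda>n. c * g x n)"
    and gsurj: "Kd d \<subseteq> g ` U0 i" and gker: "\<And>x. x \<in> U0 i \<Longrightarrow> g x = 0 \<longleftrightarrow> x \<in> ?R0"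
    using tg unfolding topiso_def by blast+
  define \<delta> where "\<delta> = (\<lambda>p::'e list. if p = [] then (1::'k) else 0)"
  have "\<delta> \<in> sp (Delta s t j) i" unfolding ji Delta_i_i[OF sink, of t] \<delta>_def by simp
  then obtain v where v: "v \<in> U1 i" "\<phi> i v = \<delta>" using phi_surj by blast
  have vM: "v \<in> sp M i" using subsp_sub[OF S1 v(1)] .
  define cf where "cf y = \<phi> i y []" for y
  have v1: "cf v = 1" unfolding cf_def v(2) \<delta>_def by simp
  have key: "y - scl M (cf y) v \<in> U0 i" if y: "y \<in> U1 i" for y
  proof -
    have sv: "scl M (cf y) v \<in> U1 i" using subsp_scl[OF S1 v(1)] .
    have in1: "y - scl M (cf y) v \<in> U1 i" using subsp_diff[OF S1 y sv] .
    have "\<phi> i (y - scl M (cf y) v) = \<phi> i y - \<phi> i (scl M (cf y) v)" using phi_diff[OF y sv] .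
    also have "\<phi> i (scl M (cf y) v) = (\<lambda>p. cf y * \<delta> p)" using phi_scl[OF v(1)] v(2) by simp
    also have "\<phi> i y = (\<lambda>p. cf y * \<delta> p)" using eq_form[OF ji y] unfolding cf_def \<delta>_def by simp
    finally have "\<phi> i (y - scl M (cf y) v) = 0" by (simp add: zero_fun_def)
    then show ?thesis using phi_ker[OF in1] by blast
  qed
  have cf_add: "cf (x + y) = cf x + cf y" if "x \<in> U1 i" "y \<in> U1 i" for x y
    unfolding cf_def using phi_add[OF that] by simp
  have cf_scl: "cf (scl M c x) = c * cf x" if "x \<in> U1 i" for c x
    unfolding cf_def using phi_scl[OF that] by simp
  have cf0: "cf x = 0" if "x \<in> U0 i" for x
  proof -
    have x1: "x \<in> U1 i" using that incl by blast
    then have "\<phi> i x = 0" using phi_ker that by blast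
    then show ?thesis unfolding cf_def by simp
  qed
  define g' where "g' y = (g (y - scl M (cf y) v))(d := cf y)" for y
  have "topiso U1 (Suc d) g'"
    unfolding topiso_def
  proof (intro conjI ballI allI subsetI)
    fix x assume "x \<in> U1 i"
    then have "g (x - scl M (cf x) v) \<in> Kd d" using gK key by blast
    then show "g' x \<in> Kd (Suc d)" unfolding g'_def Kd_def by auto
  next
    fix x y assume x: "x \<in> U1 i" and y: "y \<in> U1 i"
    have xy: "x + y \<in> U1 i" using subsp_add[OF S1 x y] .
    have "scl M (cf x + cf y) v = scl M (cf x) v + scl M (cf y) v" using vs_scl_distr[OF vsM vM] .
    then have eq: "(x + y) - scl M (cf (x + y)) v = (x - scl M (cf x) v) + (y - scl M (cf y) v)"
      using cf_add[OF x y] by (simp add: algebra_simps)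
    have "g ((x + y) - scl M (cf (x + y)) v) = g (x - scl M (cf x) v) + g (y - scl M (cf y) v)"
      unfolding eq by (rule gadd[OF key[OF x] key[OF y]])
    then show "g' (x + y) = g' x + g' y" unfolding g'_def using cf_add[OF x y] by (simp add: fun_eq_iff)
  next
    fix c x assume x: "x \<in> U1 i"
    have sv: "scl M (cf x) v \<in> sp M i" using subsp_scl[OF subspM vM] .
    have xM: "x \<in> sp M i" using subsp_sub[OF S1 x] .
    have "scl M c x - scl M (cf (scl M c x)) v = scl M c x - scl M c (scl M (cf x) v)"
      using cf_scl[OF x] vs_scl_assoc[OF vsM vM] by simp
    also have "\<dots> = scl M c (x - scl M (cf x) v)" using vs_scl_diff[OF vsM xM sv] by simp
    finally have "g (scl M c x - scl M (cf (scl M c x)) v) = (\<lambda>n. c * g (x - scl M (cf x) v) n)"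
      using gscl key[OF x] by simp
    then show "g' (scl M c x) = (\<lambda>n. c * g' x n)" unfolding g'_def using cf_scl[OF x] by (simp add: fun_eq_iff)
  next
    fix u assume u: "u \<in> Kd (Suc d)"
    have "u(d := 0) \<in> Kd d" using u unfolding Kd_def by simp
    then have "u(d := 0) \<in> g ` U0 i" using gsurj by (rule subsetD[rotated])
    then obtain x0 where x0: "x0 \<in> U0 i" "g x0 = u(d := 0)" by (metis imageE)
    have x01: "x0 \<in> U1 i" using x0 incl by blast
    have sv: "scl M (u d) v \<in> U1 i" using subsp_scl[OF S1 v(1)] .
    define y where "y = x0 + scl M (u d) v"
    have y: "y \<in> U1 i" unfolding y_def using subsp_add[OF S1 x01 sv] .
    have "cf y = u d" unfolding y_def using cf_add[OF x01 sv] cf_scl[OF v(1)] cf0[OF x0(1)] v1 by simp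
    then have "y - scl M (cf y) v = x0" unfolding y_def by simp
    then have "g' y = u" unfolding g'_def using x0 \<open>cf y = u d\<close> by (simp add: fun_eq_iff)
    then show "u \<in> g' ` U1 i" using y by blast
  next
    fix y assume y: "y \<in> U1 i"
    have s0: "scl M 0 v = 0" using vs_scl_zero[OF vsM vM] .
    show "g' y = 0 \<longleftrightarrow> y \<in> ?R1"
    proof
      assume g0: "g' y = 0"
      have "g' y d = 0" using g0 by simp
      then have c0: "cf y = 0" unfolding g'_def by simp
      then have yy: "y - scl M (cf y) v = y" using s0 by simp
      then have y0: "y \<in> U0 i" using key[OF y] by simp
      have "g y d = 0" using gK[OF y0] unfolding Kd_def by simp
      then have "g y = 0" using g0 yy unfolding g'_def by (simp add: fun_eq_iff) (metis fun_upd_apply)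
      then show "y \<in> ?R1" using gker[OF y0] R10 by simp
    next
      assume "y \<in> ?R1"
      then have y0: "y \<in> U0 i" "y \<in> ?R0" using R10 R0U by auto
      then have "cf y = 0" using cf0 by blast
      then have "y - scl M (cf y) v = y" using s0 by simp
      moreover have "g y = 0" using gker y0 by blast
      ultimately show "g' y = 0" unfolding g'_def using \<open>cf y = 0\<close> by (simp add: fun_eq_iff)
    qed
  qed
  then show ?thesis by blast
qed

lemma filt_Y: assumes subY: "is_subrep s t M Y" and Yo: "\<And>l. l \<noteq> i \<Longrightarrow> Y l = sp M l"
    and YR: "Rof (sp M) \<subseteq> Y i"
  shows "quot_iso s t (restrict M (\<lambda>l. U1 l \<inter> Y l)) (\<lambda>l. U0 l \<inter> Y l) (Delta s t j)
     \<or> (\<lambda>l. U1 l \<inter> Y l) = (\<lambda>l. U0 l \<inter> Y l)"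
proof (cases "j = i \<and> (\<forall>x\<in>U1 i \<inter> Y i. \<phi> i x = 0)")
  case True
  have "U1 l \<inter> Y l = U0 l \<inter> Y l" for l
  proof (cases "l = i")
    case True
    then show ?thesis using \<open>j = i \<and> _\<close> phi_ker incl by blast
  next
    case False
    then show ?thesis using eq_other \<open>j = i \<and> _\<close> by simp
  qed
  then show ?thesis by blast
next
  case nt: False
  let ?V1 = "\<lambda>l. U1 l \<inter> Y l" and ?V0 = "\<lambda>l. U0 l \<inter> Y l"
  have SY: "\<And>l. subsp (scl M) (sp M l) (Y l)" using subrep_subsp[OF subY] .
  have U1sp: "\<And>l. U1 l \<subseteq> sp M l" using subrep_sub[OF sub1] .
  have homV: "is_hom s t (restrict M ?V1) (Delta s t j) \<phi>"
    using hom unfolding is_hom_def by (auto intro: lin_mono)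
  have imgV: "\<phi> l ` ?V1 l = sp (Delta s t j) l" for l
  proof
    show "\<phi> l ` ?V1 l \<subseteq> sp (Delta s t j) l" using phi_in by blast
  next
    show "sp (Delta s t j) l \<subseteq> \<phi> l ` ?V1 l"
    proof
      fix h :: "'e list \<Rightarrow> 'k" assume h: "h \<in> sp (Delta s t j) l"
      show "h \<in> \<phi> l ` ?V1 l"
      proof (cases "l = i")
        case False
        then have "?V1 l = U1 l" using Yo U1sp by blast
        then show ?thesis using phi_surj[OF h] by auto
      next
        case li: True
        show ?thesis
        proof (cases "j = i")
          case False
          obtain r where r: "r \<in> Rof U1" "\<phi> i r = h" using ne_surjR[OF False] h li by blast
          have "r \<in> U1 i" using r R_sub[OF sub1] by blast
          moreover have "Rof U1 \<subseteq> Rof (sp M)" by (rule R_mono) (rule U1sp)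
          then have "r \<in> Y i" using r YR by blast
          ultimately show ?thesis using r li by blast
        next
          case ji: True
          then obtain x0 where x0: "x0 \<in> ?V1 i" "\<phi> i x0 \<noteq> 0" using nt by blast
          define c0 where "c0 = \<phi> i x0 []"
          have f0: "\<And>p. \<phi> i x0 p = c0 * (if p = [] then 1 else 0)"
            unfolding c0_def using eq_form[OF ji, of x0] x0(1) by (metis IntD1)
          have c0: "c0 \<noteq> 0"
          proof
            assume "c0 = 0"
            then have "\<phi> i x0 = 0" using f0 by (simp add: fun_eq_iff)
            then show False using x0(2) by blast
          qed
          have "h \<in> sp (Delta s t i) i" using h li ji by simp
          then have hf: "\<And>p. h p \<noteq> 0 \<Longrightarrow> p = []" using Delta_i_i[OF sink, of t] by blast
          define x where "x = scl M (h [] / c0) x0"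
          have x01: "x0 \<in> U1 i" "x0 \<in> Y i" using x0(1) by auto
          have xV: "x \<in> ?V1 i" unfolding x_def using subsp_scl[OF S1 x01(1)] subsp_scl[OF SY x01(2)] by simp
          have "\<phi> i x = h"
          proof
            fix p
            have "\<phi> i x p = (h [] / c0) * \<phi> i x0 p" unfolding x_def using phi_scl[OF x01(1)] by simp
            also have "\<dots> = h p"
            proof (cases "p = []")
              case True then show ?thesis using f0[of p] c0 by simp
            next
              case False then show ?thesis using f0[of p] hf[of p] by auto
            qed
            finally show "\<phi> i x p = h p" .
          qed
          then show ?thesis using xV li by blast
        qed
      qed
    qed
  qed
  have kerV: "{x \<in> ?V1 l. \<phi> l x = 0} = ?V0 l" for l using ker[of l] incl[of l] by blast
  have "quot_iso s t (restrict M ?V1) ?V0 (Delta s t j)"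
    unfolding quot_iso_def restrict_simps using homV imgV kerV by blast
  then show ?thesis by blast
qed

end

context qsetup begin

lemma single_R: assumes U: "is_subrep s t M U" and b: "b \<in> Ai" and x: "x \<in> U (s b)"
  shows "act M (Inl b) x \<in> Rof U"
proof -
  have z: "act M (Inl a) 0 = 0" for a using lin_zero[OF linL subsp_zero[OF subspM]] .
  have "(\<Sum>a\<in>Ai. act M (Inl a) (if a = b then x else 0)) \<in> Rof U"
    by (rule RofI) (use x subsp_zero[OF subrep_subsp[OF U]] in auto)
  moreover have "(\<Sum>a\<in>Ai. act M (Inl a) (if a = b then x else 0)) = (\<Sum>a\<in>Ai. if a = b then act M (Inl b) x else 0)"
    by (rule sum.cong) (auto simp: z)
  ultimately show ?thesis using b by simp
qed

lemma subrep_full: "is_subrep s t M (sp M)"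
  unfolding is_subrep_def using vsM actA by (auto simp: is_vs_def)

lemma Kd0: "Kd 0 = {0}" by (auto simp: Kd_def fun_eq_iff)

lemma filt_facts: assumes "delta_filtration s t M n F js"
  shows "length js = n" "\<And>k. k \<le> n \<Longrightarrow> is_subrep s t M (F k)" "F 0 = (\<lambda>l. {0})" "F n = sp M"
    "\<And>k l. k < n \<Longrightarrow> F k l \<subseteq> F (Suc k) l"
    "\<And>k. k < n \<Longrightarrow> quot_iso s t (restrict M (F (Suc k))) (F k) (Delta s t (js ! k))"
  using assms unfolding delta_filtration_def by auto

lemma filt_stepl: assumes "delta_filtration s t M n F js" "k < n"
  shows "\<exists>\<phi>. stepl s t M i (F k) (F (Suc k)) (js ! k) \<phi>"
proof -
  obtain \<phi> where \<phi>: "is_hom s t (restrict M (F (Suc k))) (Delta s t (js ! k)) \<phi>"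
    "\<forall>l. \<phi> l ` sp (restrict M (F (Suc k))) l = sp (Delta s t (js ! k)) l \<and>
       {x \<in> sp (restrict M (F (Suc k))) l. \<phi> l x = 0} = F k l"
    using filt_facts(6)[OF assms] unfolding quot_iso_def by blast
  have "stepl s t M i (F k) (F (Suc k)) (js ! k) \<phi>"
    unfolding stepl_def stepl_axioms_def
    using qsetup_axioms \<phi> filt_facts(2,5)[OF assms(1)] assms(2) by auto
  then show ?thesis by blast
qed

definition cnt :: "'v list \<Rightarrow> nat \<Rightarrow> nat" where
  "cnt js k = length (filter (\<lambda>j. j = i) (take k js))"

lemma topiso_filt: assumes F: "delta_filtration s t M n F js" and k: "k \<le> n"
  shows "\<exists>g. topiso (F k) (cnt js k) g"
  using k
proof (induction k)
  case 0
  have F0: "F 0 = (\<lambda>l. {0})" by (rule filt_facts(3)[OF F])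
  have R0: "0 \<in> Rof (F 0)" using subsp_zero[OF R_subsp[OF filt_facts(2)[OF F, of 0]]] by simp
  have "topiso (F 0) 0 (\<lambda>_. 0)"
    unfolding topiso_def using R0 by (auto simp: F0 Kd0)
  then show ?case by (auto simp: cnt_def)
next
  case (Suc k)
  then have kn: "k < n" by simp
  obtain g where g: "topiso (F k) (cnt js k) g" using Suc by auto
  obtain \<phi> where st: "stepl s t M i (F k) (F (Suc k)) (js ! k) \<phi>" using filt_stepl[OF F kn] by blast
  interpret st: stepl s t M i "F k" "F (Suc k)" "js ! k" \<phi> by (rule st)
  have tk: "take (Suc k) js = take k js @ [js ! k]"
    using filt_facts(1)[OF F] kn by (simp add: take_Suc_conv_app_nth)
  show ?case
  proof (cases "js ! k = i")
    case True
    then have "cnt js (Suc k) = Suc (cnt js k)" unfolding cnt_def tk by simp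
    then show ?thesis using st.step_eq[OF True g] by simp
  next
    case False
    then have "cnt js (Suc k) = cnt js k" unfolding cnt_def tk by simp
    then show ?thesis using st.step_ne[OF False g] by simp
  qed
qed

lemma rp_scl: "scl (rep_pow R d) = (\<lambda>c x n. if n < d then scl R c (x n) else 0)"
  by (simp add: rep_pow_def)
lemma rp_sp: "sp (rep_pow R d) l = {x. \<forall>n. (n < d \<longrightarrow> x n \<in> sp R l) \<and> (d \<le> n \<longrightarrow> x n = 0)}"
  by (simp add: rep_pow_def)
lemma rp_act: "act (rep_pow R d) a x = (\<lambda>n. if n < d then act R a (x n) else 0)"
  by (simp add: rep_pow_def)

lemma spN_other: assumes "l \<noteq> i" shows "sp (rep_pow (Delta s t i :: ('v,'e,'k,'e list \<Rightarrow> 'k) rep) d) l = {0}"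
proof -
  have D: "sp (Delta s t i) l = {0}" using Delta_i_other[OF sink assms] .
  have "x = 0" if "\<forall>n. (n < d \<longrightarrow> x n \<in> {0}) \<and> (d \<le> n \<longrightarrow> x n = 0)" for x :: "nat \<Rightarrow> 'e list \<Rightarrow> 'k"
  proof
    fix n show "x n = 0 n" using that by (cases "n < d") auto
  qed
  then show ?thesis unfolding rp_sp D by auto
qed

lemma spN_i: "sp (rep_pow (Delta s t i) d) i = {x. \<forall>n. (n < d \<longrightarrow> (\<forall>p. x n p \<noteq> 0 \<longrightarrow> p = [])) \<and> (d \<le> n \<longrightarrow> x n = 0)}"
  unfolding rp_sp Delta_i_i[OF sink] by simp

lemma actN_Inl0: "act (rep_pow (Delta s t j) d) (Inl a) 0 = 0"
  unfolding rp_act Delta_Inl by (auto simp: fun_eq_iff split: list.split)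

lemma actN_Inr: "act (rep_pow (Delta s t j) d) (Inr a) x = 0"
  unfolding rp_act Delta_Inr by (auto simp: fun_eq_iff)

definition Y0 :: "'v \<Rightarrow> 'm set" where "Y0 l = (if l = i then Rof (sp M) else sp M l)"

lemma Y0_subrep: "is_subrep s t M Y0"
  unfolding is_subrep_def
proof (intro conjI allI)
  fix l
  show "Y0 l \<subseteq> sp M l" unfolding Y0_def using R_sub[OF subrep_full] by auto
  show "closed_subspace (scl M) (Y0 l)" unfolding Y0_def
    using R_subsp[OF subrep_full] vsM by (auto simp: subsp_def is_vs_def)
next
  fix a
  show "act M a ` Y0 (dsrc s t a) \<subseteq> Y0 (dtgt s t a)"
  proof (cases a)
    case (Inl b)
    have sb: "s b \<noteq> i" using sink by blast
    show ?thesis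
    proof
      fix y assume "y \<in> act M a ` Y0 (dsrc s t a)"
      then obtain x where x: "x \<in> sp M (s b)" "y = act M (Inl b) x" using Inl sb unfolding Y0_def by auto
      show "y \<in> Y0 (dtgt s t a)"
      proof (cases "t b = i")
        case True
        then have "b \<in> Ai" by (simp add: Ai_def)
        then show ?thesis using single_R[OF subrep_full _ x(1)] x(2) Inl True unfolding Y0_def by simp
      next
        case False
        then show ?thesis using actL[OF x(1)] x(2) Inl unfolding Y0_def by simp
      qed
    qed
  next
    case (Inr b)
    have sb: "s b \<noteq> i" using sink by blast
    have "Y0 (t b) \<subseteq> sp M (t b)" unfolding Y0_def using R_sub[OF subrep_full] by auto
    then show ?thesis using actA[of _ "Inr b"] Inr sb unfolding Y0_def by auto
  qed
qed

lemma exist: assumes tg: "topiso (sp M) d g"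
  shows "quot_iso s t M Y0 (rep_pow (Delta s t i) d)"
proof -
  let ?N = "rep_pow (Delta s t i) d" and ?R = "Rof (sp M)"
  have gK: "\<And>x. x \<in> sp M i \<Longrightarrow> g x \<in> Kd d" and gadd: "\<And>x y. x \<in> sp M i \<Longrightarrow> y \<in> sp M i \<Longrightarrow> g (x + y) = g x + g y"
    and gscl: "\<And>c x. x \<in> sp M i \<Longrightarrow> g (scl M c x) = (\<lambda>n. c * g x n)"
    and gsurj: "Kd d \<subseteq> g ` sp M i" and gker: "\<And>x. x \<in> sp M i \<Longrightarrow> g x = 0 \<longleftrightarrow> x \<in> ?R"
    using tg unfolding topiso_def by blast+
  define f where "f l x = (if l = i then (\<lambda>n (p::'e list). if n < d \<and> p = [] then g x n else (0::'k)) else 0)" for l x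
  have lin: "lin_on (scl M) (scl ?N) (sp M l) (f l)" for l
    unfolding lin_on_def rp_scl Delta_scl
  proof (intro conjI ballI allI)
    fix x y assume "x \<in> sp M l" "y \<in> sp M l"
    then show "f l (x + y) = f l x + f l y" unfolding f_def using gadd by (auto simp: fun_eq_iff)
  next
    fix c x assume "x \<in> sp M l"
    then show "f l (scl M c x) = (\<lambda>n. if n < d then (\<lambda>p. c * f l x n p) else 0)"
      unfolding f_def using gscl by (auto simp: fun_eq_iff)
  qed
  have into: "f l x \<in> sp ?N l" if "x \<in> sp M l" for l x
  proof (cases "l = i")
    case True then show ?thesis unfolding f_def by (simp add: spN_i zero_fun_def)
  next
    case False then show ?thesis unfolding spN_other[OF False] f_def by simp
  qed
  have comm: "f (dtgt s t a) (act M a x) = act ?N a (f (dsrc s t a) x)" if x: "x \<in> sp M (dsrc s t a)" for a x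
  proof (cases a)
    case (Inl b)
    have sb: "s b \<noteq> i" using sink by blast
    have rhs: "act ?N a (f (dsrc s t a) x) = 0" using Inl sb unfolding f_def by (simp add: actN_Inl0)
    show ?thesis
    proof (cases "t b = i")
      case True
      then have "b \<in> Ai" by (simp add: Ai_def)
      then have "act M (Inl b) x \<in> ?R" using single_R[OF subrep_full] x Inl by simp
      moreover have "act M (Inl b) x \<in> sp M i" using actL[of x b] x Inl True by simp
      ultimately have "g (act M (Inl b) x) = 0" using gker by blast
      then show ?thesis using rhs Inl True unfolding f_def by (simp add: fun_eq_iff)
    next
      case False
      then show ?thesis using rhs Inl unfolding f_def by simp
    qed
  next
    case (Inr b)
    have sb: "s b \<noteq> i" using sink by blast
    then show ?thesis using Inr unfolding f_def by (simp add: actN_Inr)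
  qed
  have hom: "is_hom s t M ?N f" unfolding is_hom_def using lin into comm by blast
  have img: "f l ` sp M l = sp ?N l" for l
  proof (cases "l = i")
    case False
    have "0 \<in> sp M l" using subsp_zero[OF subspM] .
    then show ?thesis unfolding spN_other[OF False] f_def using False by auto
  next
    case li: True
    show ?thesis
    proof
      show "f l ` sp M l \<subseteq> sp ?N l" using into by blast
    next
      show "sp ?N l \<subseteq> f l ` sp M l"
      proof
        fix z :: "nat \<Rightarrow> 'e list \<Rightarrow> 'k" assume z: "z \<in> sp ?N l"
        then have z': "\<And>n p. n < d \<Longrightarrow> z n p \<noteq> 0 \<Longrightarrow> p = []" "\<And>n. d \<le> n \<Longrightarrow> z n = 0"
          unfolding li spN_i by auto
        define u where "u n = (if n < d then z n [] else 0)" for n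
        have "u \<in> Kd d" unfolding u_def Kd_def by simp
        then have "u \<in> g ` sp M i" using gsurj by (rule subsetD[rotated])
        then obtain x where x: "x \<in> sp M i" "g x = u" by (metis imageE)
        have "f l x = z"
        proof (intro ext)
          fix n p show "f l x n p = z n p"
          proof (cases "n < d")
            case True then show ?thesis using z'(1)[OF True, of p] x(2) li unfolding f_def u_def by auto
          next
            case False then show ?thesis using z'(2)[of n] li unfolding f_def by simp
          qed
        qed
        then show "z \<in> f l ` sp M l" using x li by blast
      qed
    qed
  qed
  have kerf: "{x \<in> sp M l. f l x = 0} = Y0 l" for l
  proof (cases "l = i")
    case False then show ?thesis unfolding f_def Y0_def by auto
  next
    case li: True
    have "f i x = 0 \<longleftrightarrow> g x = 0" if "x \<in> sp M i" for x
    proof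
      assume "f i x = 0"
      then have "g x n = 0" if "n < d" for n
      proof -
        have "f i x n [] = 0" using \<open>f i x = 0\<close> by simp
        then show ?thesis using that unfolding f_def by simp
      qed
      moreover have "g x n = 0" if "\<not> n < d" for n using gK[OF \<open>x \<in> sp M i\<close>] that unfolding Kd_def by simp
      ultimately show "g x = 0" by (auto simp: fun_eq_iff)
    next
      assume "g x = 0" then show "f i x = 0" unfolding f_def by (auto simp: fun_eq_iff)
    qed
    then show ?thesis using li gker R_sub[OF subrep_full] unfolding Y0_def by auto
  qed
  show ?thesis unfolding quot_iso_def using hom img kerf by blast
qed

lemma uniq: assumes tg: "topiso (sp M) d g" and subY: "is_subrep s t M Y"
    and qi: "quot_iso s t M Y (rep_pow (Delta s t i) d)"
  shows "Y = Y0"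
proof -
  let ?N = "rep_pow (Delta s t i) d" and ?R = "Rof (sp M)"
  have gK: "\<And>x. x \<in> sp M i \<Longrightarrow> g x \<in> Kd d" and gadd: "\<And>x y. x \<in> sp M i \<Longrightarrow> y \<in> sp M i \<Longrightarrow> g (x + y) = g x + g y"
    and gscl: "\<And>c x. x \<in> sp M i \<Longrightarrow> g (scl M c x) = (\<lambda>n. c * g x n)"
    and gsurj: "Kd d \<subseteq> g ` sp M i" and gker: "\<And>x. x \<in> sp M i \<Longrightarrow> g x = 0 \<longleftrightarrow> x \<in> ?R"
    using tg unfolding topiso_def by blast+
  obtain f where hom: "is_hom s t M ?N f" and img: "\<And>l. f l ` sp M l = sp ?N l"
    and ker: "\<And>l. {x \<in> sp M l. f l x = 0} = Y l"
    using qi unfolding quot_iso_def by blast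
  have lin: "lin_on (scl M) (scl ?N) (sp M l) (f l)" for l using hom unfolding is_hom_def by blast
  have comm: "\<And>a x. x \<in> sp M (dsrc s t a) \<Longrightarrow> f (dtgt s t a) (act M a x) = act ?N a (f (dsrc s t a) x)"
    using hom unfolding is_hom_def by blast
  have fo: "f l x = 0" if "l \<noteq> i" "x \<in> sp M l" for l x
    using img[of l] spN_other[OF that(1)] that(2) by blast
  have Yo: "Y l = sp M l" if "l \<noteq> i" for l using ker[of l] fo[OF that] by blast
  have YR: "?R \<subseteq> Y i"
  proof
    fix r assume rR: "r \<in> ?R"
    obtain x where x: "\<forall>a\<in>Ai. x a \<in> sp M (s a)" and r: "r = (\<Sum>a\<in>Ai. act M (Inl a) (x a))"
      using RofE[OF rR] by blast
    have terms: "act M (Inl a) (x a) \<in> sp M i" if "a \<in> Ai" for a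
      using actL[of "x a" a] x that by (simp add: Ai_def)
    have rM: "r \<in> sp M i" unfolding r by (intro subsp_sum[OF subspM]) (auto intro: terms)
    have "f i r = (\<Sum>a\<in>Ai. f i (act M (Inl a) (x a)))" unfolding r
      by (rule lin_sum[OF lin subspM]) (auto intro: terms)
    also have "\<dots> = 0"
    proof (rule sum.neutral, rule ballI)
      fix a assume a: "a \<in> Ai"
      have sa: "s a \<noteq> i" using sink by blast
      have "f (dtgt s t (Inl a)) (act M (Inl a) (x a)) = act ?N (Inl a) (f (dsrc s t (Inl a)) (x a))"
        using comm[of "x a" "Inl a"] x a by simp
      then have "f (t a) (act M (Inl a) (x a)) = act ?N (Inl a) 0" using fo[OF sa] x a by simp
      then show "f i (act M (Inl a) (x a)) = 0" using a actN_Inl0 by (simp add: Ai_def)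
    qed
    finally show "r \<in> Y i" using ker[of i] rM by blast
  qed
  have fY: "f i x = 0" if "x \<in> ?R" for x
  proof -
    have "x \<in> Y i" using YR that by blast
    then show ?thesis using ker[of i] by blast
  qed
  have gdiff: "g (x - y) = g x - g y" if "x \<in> sp M i" "y \<in> sp M i" for x y
  proof -
    have "x - y \<in> sp M i" using subsp_diff[OF subspM that] .
    then have "g (x - y + y) = g (x - y) + g y" using gadd that(2) by blast
    then show ?thesis by (simp add: eq_diff_eq)
  qed
  define pre where "pre u = (SOME x. x \<in> sp M i \<and> g x = u)" for u
  have pre: "pre u \<in> sp M i \<and> g (pre u) = u" if "u \<in> Kd d" for u
  proof -
    have "u \<in> g ` sp M i" by (rule subsetD[OF gsurj that])
    then have "\<exists>x. x \<in> sp M i \<and> g x = u" by blast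
    then show ?thesis unfolding pre_def by (rule someI_ex)
  qed
  have fp: "f i (pre (g x)) = f i x" if x: "x \<in> sp M i" for x
  proof -
    have p: "pre (g x) \<in> sp M i" "g (pre (g x)) = g x" using pre[OF gK[OF x]] by auto
    have "g (pre (g x) - x) = 0" using gdiff[OF p(1) x] p(2) by simp
    then have "pre (g x) - x \<in> ?R" using gker subsp_diff[OF subspM p(1) x] by blast
    then have "f i (pre (g x) - x) = 0" by (rule fY)
    then show ?thesis using lin_diff[OF lin subspM p(1) x] by simp
  qed
  define co where "co z = (\<lambda>n. if n < d then z n [] else (0::'k))" for z :: "nat \<Rightarrow> 'e list \<Rightarrow> 'k"
  define T where "T u = co (f i (pre u))" for u
  have TK: "T u \<in> Kd d" for u unfolding T_def co_def Kd_def by simp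
  have Tg: "T (g x) = co (f i x)" if "x \<in> sp M i" for x unfolding T_def using fp[OF that] by simp
  have inj: "u = 0" if u: "u \<in> Kd d" "T u = 0" for u
  proof (rule Kd_surj_inj[of "Kd d" d T])
    show "Kd d = {v. \<forall>n\<ge>d. v n = 0}" by (simp add: Kd_def)
  next
    show "\<forall>u\<in>Kd d. \<forall>v\<in>Kd d. T (u + v) = T u + T v"
    proof (intro ballI)
      fix u v assume uv: "u \<in> Kd d" "v \<in> Kd d"
      have pu: "pre u \<in> sp M i" "g (pre u) = u" using pre[OF uv(1)] by auto
      have pv: "pre v \<in> sp M i" "g (pre v) = v" using pre[OF uv(2)] by auto
      have s: "pre u + pre v \<in> sp M i" using subsp_add[OF subspM pu(1) pv(1)] .
      have "g (pre u + pre v) = u + v" using gadd[OF pu(1) pv(1)] pu pv by simp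
      then have "T (u + v) = co (f i (pre u + pre v))" using Tg[OF s] by simp
      also have "\<dots> = co (f i (pre u) + f i (pre v))" using lin_add[OF lin pu(1) pv(1)] by simp
      also have "\<dots> = T u + T v" unfolding T_def co_def by (auto simp: fun_eq_iff)
      finally show "T (u + v) = T u + T v" .
    qed
  next
    show "\<forall>c. \<forall>u\<in>Kd d. T (\<lambda>n. c * u n) = (\<lambda>n. c * T u n)"
    proof (intro allI ballI)
      fix c u assume u: "u \<in> Kd d"
      have pu: "pre u \<in> sp M i" "g (pre u) = u" using pre[OF u] by auto
      have s: "scl M c (pre u) \<in> sp M i" using subsp_scl[OF subspM pu(1)] .
      have "g (scl M c (pre u)) = (\<lambda>n. c * u n)" using gscl[OF pu(1)] pu by simp
      then have "T (\<lambda>n. c * u n) = co (f i (scl M c (pre u)))" using Tg[OF s] by simp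
      also have "\<dots> = co (scl ?N c (f i (pre u)))" using lin_scl[OF lin pu(1)] by simp
      also have "\<dots> = (\<lambda>n. c * T u n)" unfolding T_def co_def rp_scl Delta_scl by (auto simp: fun_eq_iff)
      finally show "T (\<lambda>n. c * u n) = (\<lambda>n. c * T u n)" .
    qed
  next
    show "T ` Kd d \<subseteq> Kd d" using TK by blast
  next
    show "Kd d \<subseteq> T ` Kd d"
    proof
      fix w assume w: "w \<in> Kd d"
      define z where "z = (\<lambda>n (p::'e list). if n < d \<and> p = [] then w n else (0::'k))"
      have "z \<in> sp ?N i" unfolding z_def by (simp add: spN_i zero_fun_def)
      then obtain x where x: "x \<in> sp M i" "f i x = z" using img[of i] by (metis imageE)
      have "T (g x) = w" using Tg[OF x(1)] x(2) w unfolding co_def z_def Kd_def by (auto simp: fun_eq_iff)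
      then show "w \<in> T ` Kd d" using gK[OF x(1)] by blast
    qed
  qed (use u in auto)
  have YiR: "Y i \<subseteq> ?R"
  proof
    fix y assume "y \<in> Y i"
    then have y: "y \<in> sp M i" "f i y = 0" using ker[of i] by auto
    have "T (g y) = 0" using Tg[OF y(1)] y(2) unfolding co_def by (simp add: fun_eq_iff)
    then have "g y = 0" using inj gK[OF y(1)] by blast
    then show "y \<in> ?R" using gker y(1) by blast
  qed
  show ?thesis
  proof
    fix l show "Y l = Y0 l"
      using Yo YR YiR unfolding Y0_def by (cases "l = i") auto
  qed
qed

end

lemma subrep_restrict_iff: "is_subrep s t (restrict M U) G \<longleftrightarrow>
  (\<forall>l. G l \<subseteq> U l \<and> closed_subspace (scl M) (G l)) \<and> (\<forall>a. act M a ` G (dsrc s t a) \<subseteq> G (dtgt s t a))"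
  by (simp add: is_subrep_def)

lemma subrep_restrict_mono: assumes "is_subrep s t (restrict M U) G" "\<And>l. U l \<subseteq> U' l"
  shows "is_subrep s t (restrict M U') G"
proof -
  have "G l \<subseteq> U' l" for l using assms unfolding subrep_restrict_iff by (meson order_trans)
  then show ?thesis using assms(1) unfolding subrep_restrict_iff by simp
qed

lemma subrep_restrict_self: "is_subrep s t M U \<Longrightarrow> is_subrep s t (restrict M U) U"
  unfolding is_subrep_def by simp

lemma subrep_int: assumes U: "is_subrep s t M U" and V: "is_subrep s t M V"
  shows "is_subrep s t M (\<lambda>l. U l \<inter> V l)"
  unfolding is_subrep_def
proof (intro conjI allI)
  fix l
  show "U l \<inter> V l \<subseteq> sp M l" using U unfolding is_subrep_def by blast
  have cU: "closed_subspace (scl M) (U l)" and cV: "closed_subspace (scl M) (V l)"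
    using U V unfolding is_subrep_def by blast+
  show "closed_subspace (scl M) (U l \<inter> V l)"
    using cU cV unfolding closed_subspace_def by (simp add: Ball_def)
next
  fix a
  have "act M a ` U (dsrc s t a) \<subseteq> U (dtgt s t a)" "act M a ` V (dsrc s t a) \<subseteq> V (dtgt s t a)"
    using U V unfolding is_subrep_def by blast+
  then show "act M a ` (U (dsrc s t a) \<inter> V (dsrc s t a)) \<subseteq> U (dtgt s t a) \<inter> V (dtgt s t a)" by blast
qed

lemma ext_filt:
  assumes F: "delta_filtration s t (restrict M U) m G js"
    and sub: "is_subrep s t M U'" and incl: "\<And>l. U l \<subseteq> U' l"
    and q: "quot_iso s t (restrict M U') U (Delta s t j)"
  shows "delta_filtration s t (restrict M U') (Suc m) (G(Suc m := U')) (js @ [j])"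
proof -
  have len: "length js = m" and subG: "\<And>k. k \<le> m \<Longrightarrow> is_subrep s t (restrict M U) (G k)"
    and G0: "\<forall>l. G 0 l = {0}" and Gm: "G m = U"
    and st: "\<And>k. k < m \<Longrightarrow> (\<forall>l. G k l \<subseteq> G (Suc k) l) \<and>
            quot_iso s t (restrict M (G (Suc k))) (G k) (Delta s t (js ! k))"
    using F unfolding delta_filtration_def by auto
  show ?thesis unfolding delta_filtration_def
  proof (intro conjI allI impI)
    show "length (js @ [j]) = Suc m" using len by simp
  next
    fix k assume k: "k \<le> Suc m"
    show "is_subrep s t (restrict M U') ((G(Suc m := U')) k)"
    proof (cases "k = Suc m")
      case True then show ?thesis using subrep_restrict_self[OF sub] by simp
    next
      case False then show ?thesis using subrep_restrict_mono[OF subG incl] k by simp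
    qed
  next
    fix l show "(G(Suc m := U')) 0 l = {0}" using G0 by simp
  next
    show "(G(Suc m := U')) (Suc m) = sp (restrict M U')" by simp
  next
    fix k l assume k: "k < Suc m"
    show "(G(Suc m := U')) k l \<subseteq> (G(Suc m := U')) (Suc k) l"
    proof (cases "k = m")
      case True then show ?thesis using Gm incl by simp
    next
      case False then show ?thesis using st[of k] k by simp
    qed
  next
    fix k assume k: "k < Suc m"
    show "quot_iso s t (restrict (restrict M U') ((G(Suc m := U')) (Suc k))) ((G(Suc m := U')) k)
        (Delta s t ((js @ [j]) ! k))"
    proof (cases "k = m")
      case True then show ?thesis using Gm q len by (simp add: nth_append)
    next
      case False
      then have "k < m" using k by simp
      then show ?thesis using st[of k] len by (simp add: nth_append)
    qed
  qed
qed

context qsetup begin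

lemma filtered: assumes F: "delta_filtration s t M n F js" and subY: "is_subrep s t M Y"
    and Yo: "\<And>l. l \<noteq> i \<Longrightarrow> Y l = sp M l" and YR: "Rof (sp M) \<subseteq> Y i"
  shows "delta_filtered s t (restrict M Y)"
proof -
  have claim: "\<exists>m G js'. delta_filtration s t (restrict M (\<lambda>l. F k l \<inter> Y l)) m G js'" if "k \<le> n" for k
    using that
  proof (induction k)
    case 0
    have Y0: "0 \<in> Y l" for l using subsp_zero[OF subrep_subsp[OF subY]] .
    let ?V = "\<lambda>l. F 0 l \<inter> Y l"
    have V: "?V = (\<lambda>l. {0})" using filt_facts(3)[OF F] Y0 by auto
    have subV: "is_subrep s t M ?V" using subrep_int[OF filt_facts(2)[OF F, of 0] subY] by simp
    have "delta_filtration s t (restrict M ?V) 0 (\<lambda>_. ?V) []"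
      unfolding delta_filtration_def using subrep_restrict_self[OF subV] fun_cong[OF V] by simp
    then show ?case by blast
  next
    case (Suc k)
    then have kn: "k < n" by simp
    obtain m G js' where IH: "delta_filtration s t (restrict M (\<lambda>l. F k l \<inter> Y l)) m G js'"
      using Suc by auto
    obtain \<phi> where st: "stepl s t M i (F k) (F (Suc k)) (js ! k) \<phi>" using filt_stepl[OF F kn] by blast
    interpret st: stepl s t M i "F k" "F (Suc k)" "js ! k" \<phi> by (rule st)
    have subV: "is_subrep s t M (\<lambda>l. F (Suc k) l \<inter> Y l)"
      using subrep_int[OF filt_facts(2)[OF F, of "Suc k"] subY] Suc.prems by simp
    have inclV: "F k l \<inter> Y l \<subseteq> F (Suc k) l \<inter> Y l" for l using st.incl by blast
    from st.filt_Y[OF subY Yo YR] show ?case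
    proof
      assume q: "quot_iso s t (restrict M (\<lambda>l. F (Suc k) l \<inter> Y l)) (\<lambda>l. F k l \<inter> Y l) (Delta s t (js ! k))"
      show ?thesis using ext_filt[OF IH subV inclV q] by blast
    next
      assume "(\<lambda>l. F (Suc k) l \<inter> Y l) = (\<lambda>l. F k l \<inter> Y l)"
      then show ?thesis using IH by metis
    qed
  qed
  obtain m G js' where "delta_filtration s t (restrict M (\<lambda>l. F n l \<inter> Y l)) m G js'"
    using claim[of n] by blast
  moreover have "(\<lambda>l. F n l \<inter> Y l) = Y" using filt_facts(4)[OF F] subrep_sub[OF subY] by auto
  ultimately show ?thesis unfolding delta_filtered_def by auto
qed

lemma main_q: assumes F: "delta_filtration s t M n F js" and d: "d = length (filter (\<lambda>j. j = i) js)"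
  shows "(\<exists>!Y. is_subrep s t M Y \<and> quot_iso s t M Y (rep_pow (Delta s t i) d))
       \<and> (\<forall>Y. is_subrep s t M Y \<and> quot_iso s t M Y (rep_pow (Delta s t i) d)
              \<longrightarrow> delta_filtered s t (restrict M Y))"
proof -
  obtain g where g: "topiso (F n) (cnt js n) g" using topiso_filt[OF F order_refl] by blast
  have "cnt js n = d" unfolding cnt_def d using filt_facts(1)[OF F] by simp
  then have tg: "topiso (sp M) d g" using g filt_facts(4)[OF F] by simp
  have e: "is_subrep s t M Y0 \<and> quot_iso s t M Y0 (rep_pow (Delta s t i) d)"
    using Y0_subrep exist[OF tg] by blast
  have u: "Y = Y0" if "is_subrep s t M Y \<and> quot_iso s t M Y (rep_pow (Delta s t i) d)" for Y
    using uniq[OF tg] that by blast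
  have f: "delta_filtered s t (restrict M Y0)"
    by (rule filtered[OF F Y0_subrep]) (auto simp: Y0_def)
  show ?thesis
  proof (intro conjI allI impI)
    show "\<exists>!Y. is_subrep s t M Y \<and> quot_iso s t M Y (rep_pow (Delta s t i) d)"
      using e u by (intro ex1I) blast+
  next
    fix Y assume "is_subrep s t M Y \<and> quot_iso s t M Y (rep_pow (Delta s t i) d)"
    then have "Y = Y0" by (rule u)
    then show "delta_filtered s t (restrict M Y)" using f by simp
  qed
qed

end

theorem mainTheorem11:
  fixes s t :: "'e::finite \<Rightarrow> 'v::finite"
    and M :: "('v, 'e, 'k::field, 'm::ab_group_add) rep"
    and i :: 'v
  assumes "alg_closed_type TYPE('k)"
    and "acyclic {(s a, t a) | a. True}"
    and "\<forall>a. s a \<noteq> i"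
    and "is_D_module s t M"
    and "delta_filtered s t M"
    and "dimDelta s t M i > 0"
  shows "(\<exists>!Y. is_subrep s t M Y \<and>
                quot_iso s t M Y (rep_pow (Delta s t i) (dimDelta s t M i)))
       \<and> (\<forall>Y. is_subrep s t M Y \<and>
                quot_iso s t M Y (rep_pow (Delta s t i) (dimDelta s t M i))
              \<longrightarrow> delta_filtered s t (restrict M Y))"
proof -
  interpret q: qsetup s t M i using assms(3,4) by unfold_locales
  obtain n F js where nFjs: "(SOME (n, F, js). delta_filtration s t M n F js) = (n, F, js)"
    by (metis prod_cases3)
  have ex: "\<exists>x. (\<lambda>(n, F, js). delta_filtration s t M n F js) x"
    using assms(5) unfolding delta_filtered_def by auto
  have "(\<lambda>(n, F, js). delta_filtration s t M n F js) (SOME x. (\<lambda>(n, F, js). delta_filtration s t M n F js) x)"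
    by (rule someI_ex[OF ex])
  then have F: "delta_filtration s t M n F js" using nFjs by simp
  have d: "dimDelta s t M i = length (filter (\<lambda>j. j = i) js)"
    unfolding dimDelta_def using nFjs by simp
  show ?thesis by (rule q.main_q[OF F d])
qed

end
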